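(* Let $B\in\mathbb{Z}^{d\times d}$ be nonsingular, let $i_1,\dots,i_d$ be any permutation of $1,\dots,d$, and for $j=1,\dots,d$ let $C^{(j)}=(B_{i_1},\dots,B_{i_j})\in\mathbb{Z}^{d\times j}$. Then $$|\det B|=|\Pi(B)\cap\mathbb{Z}^d|=\prod_{j=1}^d \mathrm{frac}_{C^{(j)}}[B_{i_j}],$$ where $\mathrm{frac}_{C^{(j)}}[B_{i_j}]$ denotes the fractionality of the coordinate of $C^{(j)}$ corresponding to the column $B_{i_j}$ (its last column).
   Context: For $M\in\mathbb{Z}^{d\times j}$ with linearly independent columns, $\Pi(M)=\{Mx:x\in[0,1)^j\}$. For every $b\in\mathbb{Z}^d$ in the real span of the columns of $M$ there is a unique $x\in\mathbb{Q}^j$ with $Mx=b$. The fractionality of a coordinate $i$ of $M$ is the maximum, over all such $b$, of the denominator $z_i\ge1$ of $x_i$ written in lowest terms $x_i=y_i/z_i$ with $\gcd(y_i,z_i)=1$. *)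

theory Defs
  imports "Jordan_Normal_Form.Determinant" "HOL-Combinatorics.Permutations"
begin

definition lattice_points_parallelepiped :: "int mat \<Rightarrow> int vec set" where
  "lattice_points_parallelepiped M =
     {b. b \<in> carrier_vec (dim_row M) \<and>
         (\<exists>x :: real vec. x \<in> carrier_vec (dim_col M) \<and>
            (\<forall>k < dim_col M. 0 \<le> x $ k \<and> x $ k < 1) \<and>
            map_mat real_of_int M *\<^sub>v x = map_vec real_of_int b)}"

definition fractionality :: "int mat \<Rightarrow> nat \<Rightarrow> int" where
  "fractionality M i =
     Max {snd (quotient_of (x $ i)) | x b.
            b \<in> carrier_vec (dim_row M) \<and> x \<in> carrier_vec (dim_col M) \<and>
            map_mat rat_of_int M *\<^sub>v x = map_vec rat_of_int b}"

end

theory Submission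
  imports Defs
begin


abbreviation den :: "rat \<Rightarrow> int" where "den q \<equiv> snd (quotient_of q)"

lemma den_pos: "den q > 0" by (rule quotient_of_denom_pos')

lemma den_dvd:
  fixes q :: rat and m :: int
  assumes "of_int m * q \<in> \<int>"
  shows "den q dvd m"
proof -
  obtain a z where qz: "quotient_of q = (a,z)" by (cases "quotient_of q")
  then have z: "z > 0" and cop: "coprime a z" and q: "q = of_int a / of_int z"
    using quotient_of_denom_pos quotient_of_coprime quotient_of_div by auto
  from assms obtain w where w: "of_int m * q = of_int w" by (auto elim: Ints_cases)
  then have "of_int (m * a) = (of_int (w * z) :: rat)" using z q by (simp add: field_simps)
  then have "m * a = w * z" by (simp only: of_int_eq_iff)
  then have "z dvd m * a" by (metis dvd_triv_right)
  then have "z dvd m" using cop by (metis coprime_commute coprime_dvd_mult_left_iff)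
  then show ?thesis using qz by simp
qed

lemma den_le:
  fixes q :: rat and m :: int
  assumes "of_int m * q \<in> \<int>" "m > 0"
  shows "den q \<le> m"
  using den_dvd[OF assms(1)] assms(2) by (simp add: zdvd_imp_le)

lemma den_inv:
  fixes a :: int assumes a: "a \<noteq> 0"
  shows "den (1 / of_int a) = \<bar>a\<bar>"
proof -
  have "of_int \<bar>a\<bar> * (1 / of_int a :: rat) = of_int (sgn a)"
    using a by (cases "a > 0") (auto simp: field_simps)
  then have d1: "den (1 / of_int a) dvd \<bar>a\<bar>" by (intro den_dvd) simp
  obtain x z where qz: "quotient_of (1 / of_int a) = (x,z)" by (cases "quotient_of (1 / of_int a)")
  then have z: "z > 0" and q: "1 / of_int a = (of_int x / of_int z :: rat)"
    using quotient_of_denom_pos quotient_of_div by auto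
  then have "of_int z = (of_int (a * x) :: rat)" using a by (simp add: field_simps)
  then have "z = a * x" by (simp only: of_int_eq_iff)
  then have "\<bar>a\<bar> dvd z" by simp
  then have "\<bar>a\<bar> dvd den (1 / of_int a)" using qz by simp
  with d1 show ?thesis using den_pos[of "1 / of_int a"] by (intro zdvd_antisym_nonneg) auto
qed

locale ratgroup =
  fixes G :: "rat set"
  assumes one: "1 \<in> G" and add: "a \<in> G \<Longrightarrow> b \<in> G \<Longrightarrow> a + b \<in> G"
    and neg: "a \<in> G \<Longrightarrow> - a \<in> G"
    and fin: "finite (den ` G)"
begin

lemma zero: "0 \<in> G" using add[OF one neg[OF one]] by simp

lemma nat_mult: "q \<in> G \<Longrightarrow> of_nat n * q \<in> G"
  by (induction n) (auto simp: zero distrib_right intro!: add)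

lemma int_mult: assumes "q \<in> G" shows "of_int k * q \<in> G"
proof (cases "k \<ge> 0")
  case True
  then show ?thesis using nat_mult[OF assms, of "nat k"] by simp
next
  case False
  then show ?thesis using neg[OF nat_mult[OF assms, of "nat (-k)"]] by simp
qed

lemma inv_den: assumes "q \<in> G" shows "1 / of_int (den q) \<in> G"
proof -
  obtain a z where qz: "quotient_of q = (a,z)" by (cases "quotient_of q")
  then have z: "z > 0" and cop: "coprime a z" and q: "q = of_int a / of_int z"
    using quotient_of_denom_pos quotient_of_coprime quotient_of_div by auto
  obtain u v where uv: "u * a + v * z = gcd a z" using bezout_int by blast
  with cop have uv1: "u * a + v * z = 1" by simp
  have "of_int u * q + of_int v * 1 = (of_int (u * a + v * z)) / (of_int z :: rat)"
    using z q by (simp add: field_simps)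
  also have "\<dots> = 1 / of_int z" using uv1 by simp
  finally have e: "of_int u * q + of_int v * 1 = 1 / of_int z" .
  have "of_int u * q + of_int v * 1 \<in> G" using add[OF int_mult[OF assms] int_mult[OF one]] .
  then show ?thesis using qz e by simp
qed

lemma inv_lcm: assumes "m > 0" "n > 0" "1 / of_int m \<in> G" "1 / of_int n \<in> G"
  shows "1 / of_int (lcm m n) \<in> G"
proof -
  obtain u v where uv: "u * m + v * n = gcd m n" using bezout_int by blast
  have g: "gcd m n * lcm m n = m * n" using assms(1,2)
    by (simp add: abs_mult)
  have gp: "gcd m n > 0" using assms by simp
  have "of_int u * (1 / of_int n) + of_int v * (1 / of_int m)
      = (of_int (u * m + v * n)) / (of_int (m * n) :: rat)"
    using assms by (simp add: field_simps)
  also have "\<dots> = of_int (gcd m n) / of_int (gcd m n * lcm m n)" using uv g by simp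
  also have "\<dots> = 1 / of_int (lcm m n)" unfolding of_int_mult
    by (rule nonzero_divide_mult_cancel_left) (use gp in simp)
  finally have e: "of_int u * (1 / of_int n) + of_int v * (1 / of_int m) = 1 / (of_int (lcm m n) :: rat)" .
  show ?thesis using add[OF int_mult[OF assms(4)] int_mult[OF assms(3)], of u v] unfolding e .
qed

definition f where "f = Max (den ` G)"

lemma f_pos: "f > 0"
proof -
  have "den 0 \<in> den ` G" using zero by (rule imageI)
  then have "den 0 \<le> f" unfolding f_def using fin by simp
  then show ?thesis using den_pos[of 0] by linarith
qed

lemma f_in: "1 / of_int f \<in> G"
proof -
  have "f \<in> den ` G" unfolding f_def using fin zero by (intro Max_in) auto
  then obtain q where "q \<in> G" "f = den q" by auto
  then show ?thesis using inv_den by simp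
qed

lemma f_mult: assumes q: "q \<in> G" shows "of_int f * q \<in> \<int>"
proof -
  obtain a z where qz: "quotient_of q = (a,z)" by (cases "quotient_of q")
  then have z: "z > 0" and qd: "q = of_int a / of_int z"
    using quotient_of_denom_pos quotient_of_div by auto
  have "1 / of_int z \<in> G" using inv_den[OF q] qz by simp
  from inv_lcm[OF f_pos z f_in this] have l: "1 / of_int (lcm f z) \<in> G" .
  have lp: "lcm f z > 0" using f_pos z by (simp add: lcm_pos_int)
  have "den (1 / of_int (lcm f z)) = lcm f z" using den_inv[of "lcm f z"] lp f_pos z by simp
  then have "lcm f z \<in> den ` G" using l by force
  then have "lcm f z \<le> f" unfolding f_def using fin by simp
  moreover have "f dvd lcm f z" by simp
  ultimately have "lcm f z = f" using f_pos lp by (meson dual_order.antisym zdvd_imp_le)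
  then have "z dvd f" by (metis dvd_lcm2)
  then obtain w where fw: "f = z * w" by auto
  have "of_int f * q = of_int (w * a)" using qd fw z by (simp add: field_simps)
  then show ?thesis by simp
qed

lemma unit_interval: "{q \<in> G. 0 \<le> q \<and> q < 1} = (\<lambda>k. of_int k / of_int f) ` {0..<f}"
proof (rule subset_antisym; rule subsetI)
  fix q :: rat assume "q \<in> {q \<in> G. 0 \<le> q \<and> q < 1}"
  then have q: "q \<in> G" "0 \<le> q" "q < 1" by auto
  from f_mult[OF q(1)] obtain k where k: "of_int f * q = of_int k" by (auto elim: Ints_cases)
  have fp: "(of_int f :: rat) > 0" using f_pos by simp
  have qk: "q = of_int k / of_int f" using k fp by (simp add: field_simps)
  have "0 \<le> (of_int k :: rat)" using k q fp by (metis mult_nonneg_nonneg less_imp_le)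
  moreover have "(of_int k :: rat) < of_int f" using k q fp by (metis mult_less_cancel_left_pos mult.right_neutral)
  ultimately have "k \<in> {0..<f}" by simp
  then show "q \<in> (\<lambda>k. of_int k / of_int f) ` {0..<f}" using qk by blast
next
  fix q :: rat assume "q \<in> (\<lambda>k. of_int k / of_int f) ` {0..<f}"
  then obtain k where k: "k \<in> {0..<f}" "q = of_int k / of_int f" by auto
  have "of_int k * (1 / of_int f) \<in> G" by (rule int_mult[OF f_in])
  moreover have "0 \<le> q" using k(2) \<open>k \<in> {0..<f}\<close> f_pos by simp
  moreover have "q < 1" using k(2) \<open>k \<in> {0..<f}\<close> f_pos by (simp add: divide_less_eq)
  ultimately show "q \<in> {q \<in> G. 0 \<le> q \<and> q < 1}" using k by simp
qed

lemma card_unit_interval: "card {q \<in> G. 0 \<le> q \<and> q < 1} = nat f"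
proof -
  have "inj_on (\<lambda>k. of_int k / (of_int f :: rat)) {0..<f}"
    using f_pos by (intro inj_onI) (simp add: divide_cancel_right)
  then show ?thesis unfolding unit_interval by (simp add: card_image)
qed

end



definition linl :: "int vec list \<Rightarrow> rat list \<Rightarrow> nat \<Rightarrow> rat" where
  "linl cs xs i = (\<Sum>k<length cs. of_int (cs!k $ i) * xs!k)"

definition boxl :: "rat list \<Rightarrow> bool" where
  "boxl xs \<longleftrightarrow> (\<forall>k<length xs. 0 \<le> xs!k \<and> xs!k < 1)"

definition XX :: "nat \<Rightarrow> int vec list \<Rightarrow> rat list set" where
  "XX d cs = {xs. length xs = length cs \<and> boxl xs \<and> (\<forall>i<d. linl cs xs i \<in> \<int>)}"

definition Xt :: "nat \<Rightarrow> int vec list \<Rightarrow> int vec \<Rightarrow> rat \<Rightarrow> rat list set" where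
  "Xt d cs c t = {xs. length xs = length cs \<and> boxl xs \<and> (\<forall>i<d. linl cs xs i + of_int (c $ i) * t \<in> \<int>)}"

definition TT :: "nat \<Rightarrow> int vec list \<Rightarrow> int vec \<Rightarrow> rat set" where
  "TT d cs c = {t. 0 \<le> t \<and> t < 1 \<and> Xt d cs c t \<noteq> {}}"

lemma linl_snoc: assumes "length xs = length cs"
  shows "linl (cs @ [c]) (xs @ [t]) i = linl cs xs i + of_int (c $ i) * t"
  unfolding linl_def using assms by (simp add: nth_append)

lemma linl_map: assumes "n = length cs"
  shows "linl cs (map g [0..<n]) i = (\<Sum>k<length cs. of_int (cs!k $ i) * g k)"
  unfolding linl_def using assms by (intro sum.cong) auto

lemma X_snoc: "XX d (cs @ [c]) = (\<Union>t\<in>TT d cs c. (\<lambda>xs. xs @ [t]) ` Xt d cs c t)"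
proof (rule subset_antisym; rule subsetI)
  fix ys assume ys: "ys \<in> XX d (cs @ [c])"
  then have ln: "length ys = Suc (length cs)" unfolding XX_def by auto
  then obtain xs t where ysd: "ys = xs @ [t]"
    by (metis length_Suc_conv_rev)
  with ln have l: "length xs = length cs" by simp
  have bx: "boxl (xs @ [t])" using ys ysd unfolding XX_def by simp
  have bxs: "boxl xs" unfolding boxl_def
  proof (intro allI impI)
    fix k assume k: "k < length xs"
    then have "k < length (xs @ [t])" by simp
    from bx[unfolded boxl_def, rule_format, OF this] k show "0 \<le> xs ! k \<and> xs ! k < 1"
      by (simp add: nth_append)
  qed
  have t: "0 \<le> t" "t < 1" using bx unfolding boxl_def
    by (metis length_append_singleton lessI nth_append_length)+
  have "xs \<in> Xt d cs c t" unfolding Xt_def using l bxs ys ysd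
    by (auto simp: XX_def linl_snoc[OF l])
  then show "ys \<in> (\<Union>t\<in>TT d cs c. (\<lambda>xs. xs @ [t]) ` Xt d cs c t)"
    using t ysd unfolding TT_def by blast
next
  fix ys assume "ys \<in> (\<Union>t\<in>TT d cs c. (\<lambda>xs. xs @ [t]) ` Xt d cs c t)"
  then obtain t xs where t: "t \<in> TT d cs c" and xs: "xs \<in> Xt d cs c t" and ysd: "ys = xs @ [t]" by auto
  have l: "length xs = length cs" using xs unfolding Xt_def by auto
  have "boxl (xs @ [t])" using t xs unfolding TT_def Xt_def boxl_def
    by (auto simp: nth_append)
  then show "ys \<in> XX d (cs @ [c])" using xs l ysd unfolding XX_def Xt_def
    by (auto simp: linl_snoc[OF l])
qed

lemma frac_frac_add: "frac (frac x + y) = frac (x + y)"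
proof -
  have "frac x + y = (x + y) + of_int (- \<lfloor>x\<rfloor>)" by (simp add: frac_def)
  then show ?thesis by (simp only: frac_add_of_int_right)
qed

lemma frac_frac_sub: "frac (frac x - y) = frac (x - y)"
proof -
  have "frac x - y = (x - y) + of_int (- \<lfloor>x\<rfloor>)" by (simp add: frac_def)
  then show ?thesis by (simp only: frac_add_of_int_right)
qed

lemma frac_sub_eq: "frac (a - b) = a - b - of_int \<lfloor>a - b\<rfloor>" by (simp add: frac_def)

lemma card_Xt:
  assumes x0: "x0 \<in> Xt d cs c t"
  shows "bij_betw (\<lambda>xs. map (\<lambda>k. frac (xs!k - x0!k)) [0..<length cs]) (Xt d cs c t) (XX d cs)"
proof -
  let ?n = "length cs"
  define \<phi> where "\<phi> = (\<lambda>xs. map (\<lambda>k. frac (xs!k - x0!k)) [0..<?n])"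
  define \<psi> where "\<psi> = (\<lambda>xs. map (\<lambda>k. frac (xs!k + x0!k)) [0..<?n])"
  have x0l: "length x0 = ?n" and x0b: "boxl x0" and x0i: "\<And>i. i < d \<Longrightarrow> linl cs x0 i + of_int (c $ i) * t \<in> \<int>"
    using x0 unfolding Xt_def by auto
  have linphi: "linl cs (\<phi> xs) i = linl cs xs i - linl cs x0 i
      - (\<Sum>k<?n. of_int (cs!k $ i) * of_int \<lfloor>xs!k - x0!k\<rfloor>)" for xs i
    unfolding \<phi>_def linl_map[OF refl] unfolding linl_def frac_sub_eq
    by (simp add: right_diff_distrib sum_subtractf)
  have linpsi: "linl cs (\<psi> xs) i = linl cs xs i + linl cs x0 i
      - (\<Sum>k<?n. of_int (cs!k $ i) * of_int \<lfloor>xs!k + x0!k\<rfloor>)" for xs i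
    unfolding \<psi>_def linl_map[OF refl] unfolding linl_def frac_def
    by (simp add: right_diff_distrib distrib_left sum_subtractf sum.distrib)
  show ?thesis unfolding \<phi>_def[symmetric]
  proof (rule bij_betw_byWitness[where f' = \<psi>])
    show "\<forall>a\<in>Xt d cs c t. \<psi> (\<phi> a) = a"
    proof
      fix a assume a: "a \<in> Xt d cs c t"
      then have al: "length a = ?n" and ab: "boxl a" unfolding Xt_def by auto
      show "\<psi> (\<phi> a) = a"
      proof (rule nth_equalityI)
        show "length (\<psi> (\<phi> a)) = length a" using al unfolding \<psi>_def by simp
        fix k assume "k < length (\<psi> (\<phi> a))"
        then have k: "k < ?n" unfolding \<psi>_def by simp
        have "\<psi> (\<phi> a) ! k = frac (frac (a!k - x0!k) + x0!k)" using k unfolding \<psi>_def \<phi>_def by simp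
        also have "\<dots> = frac (a!k)" by (simp add: frac_frac_add)
        also have "\<dots> = a!k" using ab k al unfolding boxl_def by (simp add: frac_eq)
        finally show "\<psi> (\<phi> a) ! k = a ! k" .
      qed
    qed
    show "\<forall>a\<in>XX d cs. \<phi> (\<psi> a) = a"
    proof
      fix a assume a: "a \<in> XX d cs"
      then have al: "length a = ?n" and ab: "boxl a" unfolding XX_def by auto
      show "\<phi> (\<psi> a) = a"
      proof (rule nth_equalityI)
        show "length (\<phi> (\<psi> a)) = length a" using al unfolding \<phi>_def by simp
        fix k assume "k < length (\<phi> (\<psi> a))"
        then have k: "k < ?n" unfolding \<phi>_def by simp
        have "\<phi> (\<psi> a) ! k = frac (frac (a!k + x0!k) - x0!k)" using k unfolding \<psi>_def \<phi>_def by simp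
        also have "\<dots> = frac (a!k)" by (simp add: frac_frac_sub)
        also have "\<dots> = a!k" using ab k al unfolding boxl_def by (simp add: frac_eq)
        finally show "\<phi> (\<psi> a) ! k = a ! k" .
      qed
    qed
    show "\<phi> ` Xt d cs c t \<subseteq> XX d cs"
    proof
      fix ys assume "ys \<in> \<phi> ` Xt d cs c t"
      then obtain a where a: "a \<in> Xt d cs c t" and ys: "ys = \<phi> a" by auto
      have bx: "boxl ys" unfolding ys \<phi>_def boxl_def by (simp add: frac_lt_1)
      have "linl cs ys i \<in> \<int>" if i: "i < d" for i
      proof -
        have e: "linl cs ys i = (linl cs a i + of_int (c $ i) * t) - (linl cs x0 i + of_int (c $ i) * t)
            - (\<Sum>k<?n. of_int (cs!k $ i) * of_int \<lfloor>a!k - x0!k\<rfloor>)" unfolding ys linphi by simp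
        have "linl cs a i + of_int (c $ i) * t \<in> \<int>" using a i unfolding Xt_def by auto
        then show ?thesis unfolding e by (intro Ints_diff x0i[OF i] Ints_sum Ints_mult Ints_of_int)
      qed
      then show "ys \<in> XX d cs" unfolding XX_def using bx unfolding ys \<phi>_def by simp
    qed
    show "\<psi> ` XX d cs \<subseteq> Xt d cs c t"
    proof
      fix ys assume "ys \<in> \<psi> ` XX d cs"
      then obtain a where a: "a \<in> XX d cs" and ys: "ys = \<psi> a" by auto
      have bx: "boxl ys" unfolding ys \<psi>_def boxl_def by (simp add: frac_lt_1)
      have "linl cs ys i + of_int (c $ i) * t \<in> \<int>" if i: "i < d" for i
      proof -
        have e: "linl cs ys i + of_int (c $ i) * t = linl cs a i + (linl cs x0 i + of_int (c $ i) * t)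
            - (\<Sum>k<?n. of_int (cs!k $ i) * of_int \<lfloor>a!k + x0!k\<rfloor>)" unfolding ys linpsi by simp
        have "linl cs a i \<in> \<int>" using a i unfolding XX_def by auto
        then show ?thesis unfolding e by (intro Ints_diff Ints_add x0i[OF i] Ints_sum Ints_mult Ints_of_int)
      qed
      then show "ys \<in> Xt d cs c t" unfolding Xt_def using bx unfolding ys \<psi>_def by simp
    qed
  qed
qed

lemma fiber_count:
  assumes f1: "finite (XX d (cs @ [c]))" and f0: "finite (XX d cs)"
  shows "card (XX d (cs @ [c])) = card (TT d cs c) * card (XX d cs)"
proof -
  have ct: "card (Xt d cs c t) = card (XX d cs)" if "t \<in> TT d cs c" for t
  proof -
    from that obtain x0 where "x0 \<in> Xt d cs c t" unfolding TT_def by auto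
    from bij_betw_same_card[OF card_Xt[OF this]] show ?thesis .
  qed
  have ft: "finite (Xt d cs c t)" if "t \<in> TT d cs c" for t
  proof -
    from that obtain x0 where "x0 \<in> Xt d cs c t" unfolding TT_def by auto
    from bij_betw_finite[OF card_Xt[OF this]] f0 show ?thesis by simp
  qed
  have "TT d cs c \<subseteq> last ` XX d (cs @ [c])"
  proof
    fix t assume t: "t \<in> TT d cs c"
    then obtain x0 where "x0 \<in> Xt d cs c t" unfolding TT_def by auto
    then have "x0 @ [t] \<in> XX d (cs @ [c])" using t unfolding X_snoc by blast
    then show "t \<in> last ` XX d (cs @ [c])" by force
  qed
  then have fT: "finite (TT d cs c)" using f1 finite_subset by blast
  have "card (XX d (cs @ [c])) = (\<Sum>t\<in>TT d cs c. card ((\<lambda>xs. xs @ [t]) ` Xt d cs c t))"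
    unfolding X_snoc
    by (rule card_UN_disjoint[OF fT]) (use ft in auto)
  also have "\<dots> = (\<Sum>t\<in>TT d cs c. card (XX d cs))"
    by (intro sum.cong refl) (simp add: card_image inj_on_def ct)
  finally show ?thesis by simp
qed



lemma mv_entry:
  fixes x :: "'a :: comm_ring_1 vec"
  assumes i: "i < d" and x: "x \<in> carrier_vec (length cs)"
  shows "(map_mat of_int (mat_of_cols d cs) *\<^sub>v x) $ i = (\<Sum>l<length cs. of_int (cs!l $ i) * x $ l)"
proof -
  have "(map_mat of_int (mat_of_cols d cs) *\<^sub>v x) $ i = row (map_mat of_int (mat_of_cols d cs)) i \<bullet> x"
    using i by simp
  also have "\<dots> = (\<Sum>l\<in>{0..<length cs}. of_int (cs!l $ i) * x $ l)"
    unfolding scalar_prod_def using i x by (intro sum.cong) (auto simp: mat_of_cols_index)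
  finally show ?thesis by (simp add: atLeast0LessThan)
qed

definition LI :: "nat \<Rightarrow> int vec list \<Rightarrow> (nat \<Rightarrow> nat \<Rightarrow> rat) \<Rightarrow> bool" where
  "LI d cs L \<longleftrightarrow> (\<forall>k<length cs. \<forall>l<length cs.
      (\<Sum>i<d. L k i * of_int (cs!l $ i)) = (if k = l then 1 else 0))"

lemma recover:
  fixes y :: "nat \<Rightarrow> 'a :: field_char_0"
  assumes LI: "LI d cs L" and eq: "\<And>i. i < d \<Longrightarrow> (\<Sum>l<length cs. of_int (cs!l $ i) * y l) = z i"
    and k: "k < length cs"
  shows "y k = (\<Sum>i<d. of_rat (L k i) * z i)"
proof -
  have "(\<Sum>i<d. of_rat (L k i) * z i) = (\<Sum>i<d. of_rat (L k i) * (\<Sum>l<length cs. of_int (cs!l $ i) * y l))"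
    using eq by simp
  also have "\<dots> = (\<Sum>i<d. \<Sum>l<length cs. (of_rat (L k i) * of_int (cs!l $ i)) * y l)"
    by (simp add: sum_distrib_left mult.assoc)
  also have "\<dots> = (\<Sum>l<length cs. \<Sum>i<d. (of_rat (L k i) * of_int (cs!l $ i)) * y l)"
    by (rule sum.swap)
  also have "\<dots> = (\<Sum>l<length cs. (\<Sum>i<d. of_rat (L k i) * of_int (cs!l $ i)) * y l)"
    by (simp add: sum_distrib_right)
  also have "\<dots> = (\<Sum>l<length cs. (if k = l then y l else 0))"
  proof (intro sum.cong refl)
    fix l assume l: "l \<in> {..<length cs}"
    have "(\<Sum>i<d. of_rat (L k i) * of_int (cs!l $ i) :: 'a) = of_rat (\<Sum>i<d. L k i * of_int (cs!l $ i))"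
      by (simp add: of_rat_sum of_rat_mult)
    also have "\<dots> = of_rat (if k = l then 1 else 0)" using LI k l unfolding LI_def by simp
    finally show "(\<Sum>i<d. of_rat (L k i) * of_int (cs!l $ i)) * y l = (if k = l then y l else 0)"
      by simp
  qed
  also have "\<dots> = y k" using k by simp
  finally show ?thesis by simp
qed

lemma P_iff:
  "b \<in> lattice_points_parallelepiped (mat_of_cols d cs) \<longleftrightarrow>
    b \<in> carrier_vec d \<and> (\<exists>x :: real vec. x \<in> carrier_vec (length cs) \<and>
      (\<forall>k<length cs. 0 \<le> x $ k \<and> x $ k < 1) \<and>
      (\<forall>i<d. (\<Sum>l<length cs. of_int (cs!l $ i) * x $ l) = of_int (b $ i)))"
proof -
  have e: "(map_mat real_of_int (mat_of_cols d cs) *\<^sub>v x = map_vec real_of_int b) \<longleftrightarrow>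
      (\<forall>i<d. (\<Sum>l<length cs. of_int (cs!l $ i) * x $ l) = of_int (b $ i))"
    if "b \<in> carrier_vec d" "x \<in> carrier_vec (length cs)" for x b
    using that by (auto simp: vec_eq_iff mv_entry simp del: index_mult_mat_vec)
  show ?thesis unfolding lattice_points_parallelepiped_def using e by auto
qed

lemma finite_intvecs: "finite {v :: int vec. v \<in> carrier_vec d \<and> (\<forall>i<d. \<bar>v $ i\<bar> \<le> R)}"
proof -
  have "{v :: int vec. v \<in> carrier_vec d \<and> (\<forall>i<d. \<bar>v $ i\<bar> \<le> R)}
      \<subseteq> vec_of_list ` {xs. set xs \<subseteq> {-R..R} \<and> length xs = d}"
  proof
    fix v :: "int vec" assume v: "v \<in> {v. v \<in> carrier_vec d \<and> (\<forall>i<d. \<bar>v $ i\<bar> \<le> R)}"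
    have "v = vec_of_list (map (\<lambda>i. v $ i) [0..<d])"
      using v by (intro eq_vecI) (auto simp: vec_of_list_index)
    moreover have "map (\<lambda>i. v $ i) [0..<d] \<in> {xs. set xs \<subseteq> {-R..R} \<and> length xs = d}"
      using v by (auto simp: abs_le_iff)
    ultimately show "v \<in> vec_of_list ` {xs. set xs \<subseteq> {-R..R} \<and> length xs = d}" by blast
  qed
  moreover have "finite (vec_of_list ` {xs. set xs \<subseteq> {-R..R} \<and> length xs = (d::nat)})"
    by (intro finite_imageI finite_lists_length_eq) simp
  ultimately show ?thesis by (rule finite_subset)
qed

lemma finite_P: "finite (lattice_points_parallelepiped (mat_of_cols d cs))"
proof -
  define R where "R = (\<Sum>l<length cs. \<Sum>i<d. \<bar>cs!l $ i\<bar>)"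
  have "lattice_points_parallelepiped (mat_of_cols d cs) \<subseteq> {v :: int vec. v \<in> carrier_vec d \<and> (\<forall>i<d. \<bar>v $ i\<bar> \<le> R)}"
  proof
    fix b assume "b \<in> lattice_points_parallelepiped (mat_of_cols d cs)"
    then obtain x :: "real vec" where b: "b \<in> carrier_vec d" and x: "\<forall>k<length cs. 0 \<le> x $ k \<and> x $ k < 1"
      and eq: "\<forall>i<d. (\<Sum>l<length cs. of_int (cs!l $ i) * x $ l) = of_int (b $ i)"
      unfolding P_iff by blast
    have "\<bar>b $ i\<bar> \<le> R" if i: "i < d" for i
    proof -
      have "real_of_int \<bar>b $ i\<bar> = \<bar>\<Sum>l<length cs. of_int (cs!l $ i) * x $ l\<bar>" using eq i by simp
      also have "\<dots> \<le> (\<Sum>l<length cs. \<bar>of_int (cs!l $ i) * x $ l\<bar>)" by (rule sum_abs)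
      also have "\<dots> \<le> (\<Sum>l<length cs. of_int \<bar>cs!l $ i\<bar>)"
      proof (rule sum_mono)
        fix l assume "l \<in> {..<length cs}"
        then have "0 \<le> x $ l" "x $ l \<le> 1" using x by auto
        then show "\<bar>of_int (cs!l $ i) * x $ l\<bar> \<le> real_of_int \<bar>cs!l $ i\<bar>"
          by (simp add: abs_mult mult_left_le)
      qed
      also have "\<dots> = of_int (\<Sum>l<length cs. \<bar>cs!l $ i\<bar>)" by simp
      also have "\<dots> \<le> of_int R" unfolding R_def of_int_le_iff
      proof (rule sum_mono)
        fix l assume "l \<in> {..<length cs}"
        show "\<bar>cs ! l $ i\<bar> \<le> (\<Sum>i<d. \<bar>cs ! l $ i\<bar>)"
          by (rule member_le_sum[where f = "\<lambda>i. \<bar>cs ! l $ i\<bar>"]) (use i in auto)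
      qed
      finally show ?thesis by simp
    qed
    then show "b \<in> {v :: int vec. v \<in> carrier_vec d \<and> (\<forall>i<d. \<bar>v $ i\<bar> \<le> R)}" using b by simp
  qed
  then show ?thesis using finite_intvecs finite_subset by blast
qed

lemma bij_X_P:
  assumes LI: "LI d cs L"
  shows "bij_betw (\<lambda>xs. vec d (\<lambda>i. \<lfloor>linl cs xs i\<rfloor>)) (XX d cs) (lattice_points_parallelepiped (mat_of_cols d cs))"
proof (rule bij_betw_imageI)
  show "inj_on (\<lambda>xs. vec d (\<lambda>i. \<lfloor>linl cs xs i\<rfloor>)) (XX d cs)"
  proof (rule inj_onI)
    fix xs ys assume xs: "xs \<in> XX d cs" and ys: "ys \<in> XX d cs"
      and eq: "vec d (\<lambda>i. \<lfloor>linl cs xs i\<rfloor>) = vec d (\<lambda>i. \<lfloor>linl cs ys i\<rfloor>)"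
    have li: "linl cs xs i = linl cs ys i" if i: "i < d" for i
    proof -
      have a: "linl cs xs i \<in> \<int>" "linl cs ys i \<in> \<int>" using xs ys i unfolding XX_def by auto
      have "\<lfloor>linl cs xs i\<rfloor> = \<lfloor>linl cs ys i\<rfloor>" using arg_cong[OF eq, of "\<lambda>v. v $ i"] i by simp
      then show ?thesis using a by (metis Ints_cases floor_of_int)
    qed
    show "xs = ys"
    proof (rule nth_equalityI)
      show "length xs = length ys" using xs ys unfolding XX_def by simp
      fix k assume "k < length xs"
      then have k: "k < length cs" using xs unfolding XX_def by simp
      have "xs ! k = (\<Sum>i<d. of_rat (L k i) * linl cs xs i)"
        by (rule recover[OF LI _ k]) (simp add: linl_def)
      also have "\<dots> = (\<Sum>i<d. of_rat (L k i) * linl cs ys i)" using li by simp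
      also have "\<dots> = ys ! k"
        by (rule recover[OF LI _ k, symmetric]) (simp add: linl_def)
      finally show "xs ! k = ys ! k" .
    qed
  qed
  show "(\<lambda>xs. vec d (\<lambda>i. \<lfloor>linl cs xs i\<rfloor>)) ` XX d cs = lattice_points_parallelepiped (mat_of_cols d cs)"
  proof (rule subset_antisym; rule subsetI)
    fix b assume "b \<in> (\<lambda>xs. vec d (\<lambda>i. \<lfloor>linl cs xs i\<rfloor>)) ` XX d cs"
    then obtain xs where xs: "xs \<in> XX d cs" and b: "b = vec d (\<lambda>i. \<lfloor>linl cs xs i\<rfloor>)" by auto
    have l: "length xs = length cs" and bx: "boxl xs" and it: "\<And>i. i < d \<Longrightarrow> linl cs xs i \<in> \<int>"
      using xs unfolding XX_def by auto
    define x :: "real vec" where "x = vec (length cs) (\<lambda>k. of_rat (xs ! k))"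
    have "(\<Sum>l<length cs. of_int (cs!l $ i) * x $ l) = of_int (b $ i)" if i: "i < d" for i
    proof -
      have "(\<Sum>l<length cs. of_int (cs!l $ i) * x $ l) = of_rat (linl cs xs i)"
        unfolding x_def linl_def by (simp add: of_rat_sum of_rat_mult)
      also have "linl cs xs i = of_int \<lfloor>linl cs xs i\<rfloor>" using it[OF i] by (metis Ints_cases floor_of_int)
      finally show ?thesis using b i by simp
    qed
    moreover have "\<forall>k<length cs. 0 \<le> x $ k \<and> x $ k < 1"
      using bx l unfolding x_def boxl_def by (simp add: of_rat_less_eq[of 0, simplified])
    moreover have "x \<in> carrier_vec (length cs)" unfolding x_def by simp
    moreover have "b \<in> carrier_vec d" using b by simp
    ultimately show "b \<in> lattice_points_parallelepiped (mat_of_cols d cs)" unfolding P_iff by blast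
  next
    fix b assume "b \<in> lattice_points_parallelepiped (mat_of_cols d cs)"
    then obtain x :: "real vec" where b: "b \<in> carrier_vec d" and x: "\<forall>k<length cs. 0 \<le> x $ k \<and> x $ k < 1"
      and eq: "\<forall>i<d. (\<Sum>l<length cs. of_int (cs!l $ i) * x $ l) = of_int (b $ i)"
      unfolding P_iff by blast
    define xs where "xs = map (\<lambda>k. \<Sum>i<d. L k i * of_int (b $ i)) [0..<length cs]"
    have xk: "x $ k = of_rat (xs ! k)" if k: "k < length cs" for k
    proof -
      have "x $ k = (\<Sum>i<d. of_rat (L k i) * of_int (b $ i))"
        by (rule recover[OF LI _ k, where y = "\<lambda>l. x $ l"]) (use eq in simp)
      then show ?thesis unfolding xs_def using k by (simp add: of_rat_sum of_rat_mult)
    qed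
    have lin: "linl cs xs i = of_int (b $ i)" if i: "i < d" for i
    proof -
      have "of_rat (linl cs xs i) = (\<Sum>l<length cs. of_int (cs!l $ i) * x $ l)"
        unfolding linl_def by (simp add: of_rat_sum of_rat_mult xk)
      also have "\<dots> = (of_rat (of_int (b $ i)) :: real)" using eq i by simp
      finally show ?thesis by (simp only: of_rat_eq_iff)
    qed
    have "xs \<in> XX d cs" unfolding XX_def boxl_def
    proof (intro CollectI conjI allI impI)
      show "length xs = length cs" unfolding xs_def by simp
    next
      fix k assume "k < length xs"
      then have k: "k < length cs" unfolding xs_def by simp
      show "0 \<le> xs ! k" using x k xk[OF k] by (metis of_rat_0 of_rat_less_eq)
      show "xs ! k < 1" using x k xk[OF k] by (metis of_rat_less_1_iff)
    next
      fix i assume "i < d" then show "linl cs xs i \<in> \<int>" using lin by simp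
    qed
    moreover have "b = vec d (\<lambda>i. \<lfloor>linl cs xs i\<rfloor>)" using b lin by (intro eq_vecI) auto
    ultimately show "b \<in> (\<lambda>xs. vec d (\<lambda>i. \<lfloor>linl cs xs i\<rfloor>)) ` XX d cs" by blast
  qed
qed



definition Gs :: "nat \<Rightarrow> int vec list \<Rightarrow> int vec \<Rightarrow> rat set" where
  "Gs d cs c = {ys ! length cs | ys. length ys = Suc (length cs) \<and> (\<forall>i<d. linl (cs @ [c]) ys i \<in> \<int>)}"

lemma TT_Gs: "TT d cs c = {q \<in> Gs d cs c. 0 \<le> q \<and> q < 1}"
proof (rule subset_antisym; rule subsetI)
  fix t assume t: "t \<in> TT d cs c"
  then obtain x0 where x0: "x0 \<in> Xt d cs c t" unfolding TT_def by auto
  then have l: "length x0 = length cs" unfolding Xt_def by simp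
  have nt: "(x0 @ [t]) ! length cs = t" using l by (metis nth_append_length)
  have "t \<in> Gs d cs c" unfolding Gs_def
    using x0 l nt by (intro CollectI exI[of _ "x0 @ [t]"]) (auto simp: Xt_def linl_snoc)
  then show "t \<in> {q \<in> Gs d cs c. 0 \<le> q \<and> q < 1}" using t unfolding TT_def by simp
next
  fix t assume "t \<in> {q \<in> Gs d cs c. 0 \<le> q \<and> q < 1}"
  then obtain ys where ys: "length ys = Suc (length cs)" "\<forall>i<d. linl (cs @ [c]) ys i \<in> \<int>"
    and t: "t = ys ! length cs" "0 \<le> t" "t < 1" unfolding Gs_def by auto
  obtain zs t' where yd: "ys = zs @ [t']" using ys(1) by (metis length_Suc_conv_rev)
  with ys(1) have zl: "length zs = length cs" by simp
  have tt: "t' = t" using t(1) yd zl by (metis nth_append_length)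
  define xs where "xs = map (\<lambda>k. frac (zs ! k)) [0..<length cs]"
  have "xs \<in> Xt d cs c t" unfolding Xt_def
  proof (intro CollectI conjI allI impI)
    show "length xs = length cs" unfolding xs_def by simp
    show "boxl xs" unfolding xs_def boxl_def by (simp add: frac_lt_1)
    fix i assume i: "i < d"
    have e: "linl cs xs i + of_int (c $ i) * t = linl (cs @ [c]) ys i
        - (\<Sum>k<length cs. of_int (cs!k $ i) * of_int \<lfloor>zs!k\<rfloor>)"
      unfolding yd linl_snoc[OF zl] tt xs_def linl_map[OF refl]
      unfolding linl_def frac_def by (simp add: right_diff_distrib sum_subtractf)
    show "linl cs xs i + of_int (c $ i) * t \<in> \<int>" unfolding e
      using ys(2) i by (intro Ints_diff Ints_sum Ints_mult Ints_of_int) auto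
  qed
  then show "t \<in> TT d cs c" using t unfolding TT_def by auto
qed

lemma linl_add: assumes "length xs = length cs" "length ys = length cs"
  shows "linl cs (map (\<lambda>k. xs!k + ys!k) [0..<length cs]) i = linl cs xs i + linl cs ys i"
  unfolding linl_map[OF refl] unfolding linl_def by (simp add: distrib_left sum.distrib)

lemma linl_neg:
  shows "linl cs (map (\<lambda>k. - xs!k) [0..<length cs]) i = - linl cs xs i"
  unfolding linl_map[OF refl] unfolding linl_def by (simp add: sum_negf)

lemma prod_den_Ints:
  assumes "finite A" "j \<in> A"
  shows "of_int (\<Prod>i\<in>A. den (h i)) * h j \<in> \<int>"
proof -
  have "(\<Prod>i\<in>A. den (h i)) = den (h j) * (\<Prod>i\<in>A - {j}. den (h i))"
    using assms by (simp add: prod.remove)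
  moreover have "of_int (den (h j)) * h j = of_int (fst (quotient_of (h j)))"
  proof -
    obtain a z where qz: "quotient_of (h j) = (a,z)" by (cases "quotient_of (h j)")
    then have "z > 0" "h j = of_int a / of_int z" using quotient_of_denom_pos quotient_of_div by auto
    then show ?thesis using qz by simp
  qed
  ultimately have "of_int (\<Prod>i\<in>A. den (h i)) * h j
     = of_int (\<Prod>i\<in>A - {j}. den (h i)) * of_int (fst (quotient_of (h j)))"
    by (metis (no_types, lifting) mult.assoc mult.commute of_int_mult)
  note e = this
  show ?thesis unfolding e by (intro Ints_mult Ints_of_int)
qed

lemma Gs_group:
  assumes LI: "LI d (cs @ [c]) L"
  shows "ratgroup (Gs d cs c)"
proof
  let ?n = "length cs"
  show "1 \<in> Gs d cs c" unfolding Gs_def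
  proof (intro CollectI exI conjI allI impI)
    show "1 = (replicate ?n 0 @ [1 :: rat]) ! ?n" by (simp add: nth_append)
    show "length (replicate ?n 0 @ [1 :: rat]) = Suc ?n" by simp
    fix i assume "i < d"
    have "linl (cs @ [c]) (replicate ?n 0 @ [1]) i = linl cs (replicate ?n 0) i + of_int (c $ i) * 1"
      by (rule linl_snoc) simp
    also have "linl cs (replicate ?n 0) i = 0" unfolding linl_def by simp
    finally show "linl (cs @ [c]) (replicate ?n 0 @ [1]) i \<in> \<int>" by simp
  qed
next
  let ?n = "length cs"
  fix a b assume a: "a \<in> Gs d cs c" and b: "b \<in> Gs d cs c"
  from a obtain xs where xs: "length xs = Suc ?n" "\<forall>i<d. linl (cs @ [c]) xs i \<in> \<int>" "a = xs ! ?n"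
    unfolding Gs_def by auto
  from b obtain ys where ys: "length ys = Suc ?n" "\<forall>i<d. linl (cs @ [c]) ys i \<in> \<int>" "b = ys ! ?n"
    unfolding Gs_def by auto
  let ?zs = "map (\<lambda>k. xs!k + ys!k) [0..<length (cs @ [c])]"
  show "a + b \<in> Gs d cs c" unfolding Gs_def
  proof (intro CollectI exI conjI allI impI)
    show "a + b = ?zs ! ?n" using xs ys by (simp del: upt_Suc)
    show "length ?zs = Suc ?n" by simp
    fix i assume i: "i < d"
    have e: "linl (cs @ [c]) ?zs i = linl (cs @ [c]) xs i + linl (cs @ [c]) ys i"
      by (rule linl_add) (use xs ys in simp_all)
    show "linl (cs @ [c]) ?zs i \<in> \<int>" unfolding e using xs ys i by simp
  qed
next
  let ?n = "length cs"
  fix a assume a: "a \<in> Gs d cs c"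
  from a obtain xs where xs: "length xs = Suc ?n" "\<forall>i<d. linl (cs @ [c]) xs i \<in> \<int>" "a = xs ! ?n"
    unfolding Gs_def by auto
  let ?zs = "map (\<lambda>k. - xs!k) [0..<length (cs @ [c])]"
  show "- a \<in> Gs d cs c" unfolding Gs_def
  proof (intro CollectI exI conjI allI impI)
    show "- a = ?zs ! ?n" using xs by (simp del: upt_Suc)
    show "length ?zs = Suc ?n" by simp
    fix i assume i: "i < d"
    show "linl (cs @ [c]) ?zs i \<in> \<int>" unfolding linl_neg using xs i by simp
  qed
next
  let ?n = "length cs"
  define N where "N = (\<Prod>i<d. den (L ?n i))"
  have Np: "N > 0" unfolding N_def by (intro prod_pos) (simp add: den_pos)
  have "den ` Gs d cs c \<subseteq> {0..N}"
  proof
    fix z assume "z \<in> den ` Gs d cs c"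
    then obtain ys where ys: "length ys = Suc ?n" "\<forall>i<d. linl (cs @ [c]) ys i \<in> \<int>"
      and z: "z = den (ys ! ?n)" unfolding Gs_def by auto
    have "ys ! ?n = (\<Sum>i<d. of_rat (L ?n i) * linl (cs @ [c]) ys i)"
      by (rule recover[OF LI]) (auto simp: linl_def)
    then have "of_int N * ys ! ?n = (\<Sum>i<d. (of_int N * L ?n i) * linl (cs @ [c]) ys i)"
      by (simp add: sum_distrib_left mult.assoc)
    also have "\<dots> \<in> \<int>"
    proof (rule Ints_sum)
      fix i assume i: "i \<in> {..<d}"
      have "of_int N * L ?n i \<in> \<int>" unfolding N_def by (rule prod_den_Ints[where h = "L ?n"]) (use i in auto)
      moreover have "linl (cs @ [c]) ys i \<in> \<int>" using ys i by auto
      ultimately show "of_int N * L ?n i * linl (cs @ [c]) ys i \<in> \<int>" by (rule Ints_mult)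
    qed
    finally have "den (ys ! ?n) \<le> N" using Np by (intro den_le)
    then show "z \<in> {0..N}" using z den_pos[of "ys ! ?n"] by simp
  qed
  then show "finite (den ` Gs d cs c)" by (rule finite_subset) simp
qed

lemma frac_Gs:
  "fractionality (mat_of_cols d (cs @ [c])) (length cs) = Max (den ` Gs d cs c)"
proof -
  let ?n = "length cs"
  let ?M = "mat_of_cols d (cs @ [c])"
  have "{den (x $ ?n) | x b. b \<in> carrier_vec (dim_row ?M) \<and> x \<in> carrier_vec (dim_col ?M) \<and>
          map_mat rat_of_int ?M *\<^sub>v x = map_vec rat_of_int b} = den ` Gs d cs c"
  proof (rule subset_antisym; rule subsetI)
    fix z assume "z \<in> {den (x $ ?n) | x b. b \<in> carrier_vec (dim_row ?M) \<and> x \<in> carrier_vec (dim_col ?M) \<and>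
          map_mat rat_of_int ?M *\<^sub>v x = map_vec rat_of_int b}"
    then obtain x b where z: "z = den (x $ ?n)" and b: "b \<in> carrier_vec d"
      and x: "x \<in> carrier_vec (Suc ?n)" and eq: "map_mat rat_of_int ?M *\<^sub>v x = map_vec rat_of_int b"
      by auto
    have "linl (cs @ [c]) (list_of_vec x) i \<in> \<int>" if i: "i < d" for i
    proof -
      have "(map_mat rat_of_int ?M *\<^sub>v x) $ i = (\<Sum>l<length (cs @ [c]). of_int ((cs @ [c])!l $ i) * x $ l)"
        by (rule mv_entry[OF i]) (use x in simp)
      also have "\<dots> = linl (cs @ [c]) (list_of_vec x) i" by (simp only: linl_def list_of_vec_index)
      finally have "linl (cs @ [c]) (list_of_vec x) i = (map_mat rat_of_int ?M *\<^sub>v x) $ i" by simp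
      also have "\<dots> = of_int (b $ i)" using eq b i by simp
      finally show ?thesis by simp
    qed
    moreover have "length (list_of_vec x) = Suc ?n" using x by simp
    ultimately have "list_of_vec x ! ?n \<in> Gs d cs c" unfolding Gs_def by blast
    then show "z \<in> den ` Gs d cs c" using z by (simp add: list_of_vec_index)
  next
    fix z assume "z \<in> den ` Gs d cs c"
    then obtain ys where ys: "length ys = Suc ?n" "\<forall>i<d. linl (cs @ [c]) ys i \<in> \<int>"
      and z: "z = den (ys ! ?n)" unfolding Gs_def by auto
    define x where "x = vec (Suc ?n) (\<lambda>k. ys ! k)"
    define b where "b = vec d (\<lambda>i. \<lfloor>linl (cs @ [c]) ys i\<rfloor>)"
    have "map_mat rat_of_int ?M *\<^sub>v x = map_vec rat_of_int b"
    proof (rule eq_vecI)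
      fix i assume "i < dim_vec (map_vec rat_of_int b)"
      then have i: "i < d" unfolding b_def by simp
      have "(map_mat rat_of_int ?M *\<^sub>v x) $ i = (\<Sum>l<length (cs @ [c]). of_int ((cs @ [c])!l $ i) * x $ l)"
        by (rule mv_entry[OF i]) (simp add: x_def)
      also have "\<dots> = linl (cs @ [c]) ys i" unfolding linl_def x_def by (intro sum.cong) auto
      also have "\<dots> = of_int \<lfloor>linl (cs @ [c]) ys i\<rfloor>" using ys(2) i by (metis Ints_cases floor_of_int)
      finally show "(map_mat rat_of_int ?M *\<^sub>v x) $ i = map_vec rat_of_int b $ i"
        using i unfolding b_def x_def by simp
    qed (simp add: b_def)
    moreover have "z = den (x $ ?n)" using z unfolding x_def by simp
    ultimately show "z \<in> {den (x $ ?n) | x b. b \<in> carrier_vec (dim_row ?M) \<and> x \<in> carrier_vec (dim_col ?M) \<and>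
          map_mat rat_of_int ?M *\<^sub>v x = map_vec rat_of_int b}"
      by (intro CollectI exI[of _ x] exI[of _ b] conjI) (simp_all add: x_def b_def)
  qed
  then show ?thesis unfolding fractionality_def by simp
qed

lemma LI_prefix: assumes "LI d (cs @ [c]) L" shows "LI d cs L"
proof (unfold LI_def, intro allI impI)
  fix k l assume k: "k < length cs" and l: "l < length cs"
  have k': "k < length (cs @ [c])" and l': "l < length (cs @ [c])" using k l by simp_all
  have eq: "(cs @ [c]) ! l = cs ! l" using l by (simp add: nth_append)
  show "(\<Sum>i<d. L k i * of_int (cs ! l $ i)) = (if k = l then 1 else 0)"
    using assms[unfolded LI_def, rule_format, OF k' l'] unfolding eq .
qed

lemma step:
  assumes LI: "LI d (cs @ [c]) L"
  shows "int (card (lattice_points_parallelepiped (mat_of_cols d (cs @ [c])))) =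
    fractionality (mat_of_cols d (cs @ [c])) (length cs) * int (card (lattice_points_parallelepiped (mat_of_cols d cs)))"
proof -
  interpret G: ratgroup "Gs d cs c" by (rule Gs_group[OF LI])
  note b1 = bij_X_P[OF LI] and b0 = bij_X_P[OF LI_prefix[OF LI]]
  have f1: "finite (XX d (cs @ [c]))" using bij_betw_finite[OF b1] finite_P by blast
  have f0: "finite (XX d cs)" using bij_betw_finite[OF b0] finite_P by blast
  have "card (lattice_points_parallelepiped (mat_of_cols d (cs @ [c]))) = card (TT d cs c) * card (XX d cs)"
    using bij_betw_same_card[OF b1] fiber_count[OF f1 f0] by simp
  also have "card (TT d cs c) = nat G.f" unfolding TT_Gs by (rule G.card_unit_interval)
  also have "card (XX d cs) = card (lattice_points_parallelepiped (mat_of_cols d cs))"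
    using bij_betw_same_card[OF b0] .
  finally show ?thesis using G.f_pos unfolding frac_Gs G.f_def by simp
qed



lemma P_empty: "lattice_points_parallelepiped (mat_of_cols d []) = {0\<^sub>v d}"
proof (rule subset_antisym; rule subsetI)
  fix b assume "b \<in> lattice_points_parallelepiped (mat_of_cols d [])"
  then have "b \<in> carrier_vec d" "\<forall>i<d. 0 = b $ i" unfolding P_iff by auto
  then show "b \<in> {0\<^sub>v d}" by (auto intro!: eq_vecI)
next
  fix b :: "int vec" assume "b \<in> {0\<^sub>v (d::nat)}"
  then have b: "b = 0\<^sub>v d" by simp
  have "vec 0 (\<lambda>_. 0) \<in> carrier_vec (length ([] :: int vec list))" by simp
  then show "b \<in> lattice_points_parallelepiped (mat_of_cols d [])" unfolding P_iff b
    by (intro conjI exI[of _ "vec 0 (\<lambda>_. 0) :: real vec"]) auto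
qed

lemma inverse_rat:
  assumes B: "B \<in> carrier_mat d d" and dB: "det B \<noteq> 0"
  obtains Bi where "Bi \<in> carrier_mat d d" "Bi * map_mat rat_of_int B = 1\<^sub>m d"
proof -
  have "det (map_mat rat_of_int B) \<noteq> 0" using dB by simp
  from det_non_zero_imp_unit[OF _ this, of d, unfolded Units_def, of "()"] B
  obtain Bi where "Bi \<in> carrier_mat d d" "Bi * map_mat rat_of_int B = 1\<^sub>m d"
    by (auto simp: ring_mat_def)
  then show ?thesis using that by blast
qed

lemma LI_perm:
  assumes B: "B \<in> carrier_mat d d" and Bi: "Bi \<in> carrier_mat d d" "Bi * map_mat rat_of_int B = 1\<^sub>m d"
    and p: "p permutes {..<d}" and j: "j \<le> d"
  shows "LI d (map (\<lambda>k. col B (p k)) [0..<j]) (\<lambda>k i. Bi $$ (p k, i))"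
proof (unfold LI_def, intro allI impI)
  fix k l assume k: "k < length (map (\<lambda>k. col B (p k)) [0..<j])" and l: "l < length (map (\<lambda>k. col B (p k)) [0..<j])"
  then have kj: "k < j" and lj: "l < j" by auto
  have pk: "p k < d" and pl: "p l < d" using permutes_in_image[OF p] kj lj j by auto
  have "(\<Sum>i<d. Bi $$ (p k, i) * of_int (map (\<lambda>k. col B (p k)) [0..<j] ! l $ i))
      = (\<Sum>i<d. Bi $$ (p k, i) * map_mat rat_of_int B $$ (i, p l))"
    using lj pl B by (intro sum.cong) auto
  also have "\<dots> = (Bi * map_mat rat_of_int B) $$ (p k, p l)"
    using pk pl B Bi(1) by (simp add: scalar_prod_def atLeast0LessThan)
  also have "\<dots> = (if p k = p l then 1 else 0)" unfolding Bi(2) using pk pl by simp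
  also have "(p k = p l) = (k = l)" using permutes_inj[OF p] by (auto dest: injD)
  finally show "(\<Sum>i<d. Bi $$ (p k, i) * of_int (map (\<lambda>k. col B (p k)) [0..<j] ! l $ i)) = (if k = l then 1 else 0)" .
qed

lemma claim2:
  assumes B: "B \<in> carrier_mat d d" and dB: "det B \<noteq> 0" and p: "p permutes {..<d}"
  shows "j \<le> d \<Longrightarrow> int (card (lattice_points_parallelepiped (mat_of_cols d (map (\<lambda>k. col B (p k)) [0..<j]))))
     = (\<Prod>i = 1..j. fractionality (mat_of_cols d (map (\<lambda>k. col B (p k)) [0..<i])) (i - 1))"
proof (induction j)
  case 0
  then show ?case by (simp add: P_empty)
next
  case (Suc j)
  obtain Bi where Bi: "Bi \<in> carrier_mat d d" "Bi * map_mat rat_of_int B = 1\<^sub>m d"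
    using inverse_rat[OF B dB] by blast
  have e: "map (\<lambda>k. col B (p k)) [0..<Suc j] = map (\<lambda>k. col B (p k)) [0..<j] @ [col B (p j)]" by simp
  have LI: "LI d (map (\<lambda>k. col B (p k)) [0..<j] @ [col B (p j)]) (\<lambda>k i. Bi $$ (p k, i))"
    using LI_perm[OF B Bi p Suc(2)] unfolding e .
  have "int (card (lattice_points_parallelepiped (mat_of_cols d (map (\<lambda>k. col B (p k)) [0..<Suc j]))))
     = fractionality (mat_of_cols d (map (\<lambda>k. col B (p k)) [0..<Suc j])) j *
       int (card (lattice_points_parallelepiped (mat_of_cols d (map (\<lambda>k. col B (p k)) [0..<j]))))"
    unfolding e using step[OF LI] by simp
  also have "\<dots> = fractionality (mat_of_cols d (map (\<lambda>k. col B (p k)) [0..<Suc j])) j *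
     (\<Prod>i = 1..j. fractionality (mat_of_cols d (map (\<lambda>k. col B (p k)) [0..<i])) (i - 1))"
    using Suc by simp
  finally show ?case by (simp add: mult.commute del: upt_Suc)
qed

lemma P_perm:
  assumes B: "B \<in> carrier_mat d d" and p: "p permutes {..<d}"
  shows "lattice_points_parallelepiped B = lattice_points_parallelepiped (mat_of_cols d (map (\<lambda>k. col B (p k)) [0..<d]))"
proof -
  have BB: "B = mat_of_cols d (map (col B) [0..<d])"
  proof -
    have "mat_of_cols (dim_row B) (cols B) = B" by (rule mat_of_cols_cols)
    then show ?thesis using B unfolding cols_def by simp
  qed
  have pi: "p l < d" "inv_into UNIV p l < d" if "l < d" for l
    using permutes_in_image[OF p] permutes_in_image[OF permutes_inv[OF p]] that by auto
  show ?thesis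
  proof (subst BB, rule subset_antisym; rule subsetI)
    fix b assume "b \<in> lattice_points_parallelepiped (mat_of_cols d (map (col B) [0..<d]))"
    then obtain x :: "real vec" where b: "b \<in> carrier_vec d" and x: "x \<in> carrier_vec d"
      "\<forall>k<d. 0 \<le> x $ k \<and> x $ k < 1"
      and eq: "\<forall>i<d. (\<Sum>l<d. of_int (col B l $ i) * x $ l) = of_int (b $ i)"
      unfolding P_iff by auto
    define y where "y = vec d (\<lambda>l. x $ p l)"
    have "(\<Sum>l<d. of_int (col B (p l) $ i) * y $ l) = of_int (b $ i)" if i: "i < d" for i
    proof -
      have "(\<Sum>l<d. of_int (col B l $ i) * x $ l) = (\<Sum>l<d. of_int (col B (p l) $ i) * x $ p l)"
        using sum.permute[OF p, of "\<lambda>l. of_int (col B l $ i) * x $ l"] by simp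
      also have "\<dots> = (\<Sum>l<d. of_int (col B (p l) $ i) * y $ l)" unfolding y_def by (intro sum.cong) auto
      finally show ?thesis using eq i by simp
    qed
    moreover have "\<forall>k<d. 0 \<le> y $ k \<and> y $ k < 1" using x pi unfolding y_def by simp
    moreover have "y \<in> carrier_vec d" unfolding y_def by simp
    ultimately show "b \<in> lattice_points_parallelepiped (mat_of_cols d (map (\<lambda>k. col B (p k)) [0..<d]))"
      unfolding P_iff using b by auto
  next
    fix b assume "b \<in> lattice_points_parallelepiped (mat_of_cols d (map (\<lambda>k. col B (p k)) [0..<d]))"
    then obtain x :: "real vec" where b: "b \<in> carrier_vec d" and x: "x \<in> carrier_vec d"
      "\<forall>k<d. 0 \<le> x $ k \<and> x $ k < 1"
      and eq: "\<forall>i<d. (\<Sum>l<d. of_int (col B (p l) $ i) * x $ l) = of_int (b $ i)"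
      unfolding P_iff by auto
    define y where "y = vec d (\<lambda>l. x $ inv_into UNIV p l)"
    have "(\<Sum>l<d. of_int (col B l $ i) * y $ l) = of_int (b $ i)" if i: "i < d" for i
    proof -
      have "(\<Sum>l<d. of_int (col B l $ i) * y $ l) = (\<Sum>l<d. of_int (col B (p l) $ i) * y $ p l)"
        using sum.permute[OF p, of "\<lambda>l. of_int (col B l $ i) * y $ l"] by simp
      also have "\<dots> = (\<Sum>l<d. of_int (col B (p l) $ i) * x $ l)"
        unfolding y_def using pi by (intro sum.cong) (auto simp: permutes_inverses[OF p])
      finally show ?thesis using eq i by simp
    qed
    moreover have "\<forall>k<d. 0 \<le> y $ k \<and> y $ k < 1" using x pi unfolding y_def by simp
    moreover have "y \<in> carrier_vec d" unfolding y_def by simp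
    ultimately show "b \<in> lattice_points_parallelepiped (mat_of_cols d (map (col B) [0..<d]))"
      unfolding P_iff using b by auto
  qed
qed



definition good :: "nat \<Rightarrow> int mat \<Rightarrow> int mat \<Rightarrow> bool" where
  "good d U V \<longleftrightarrow> U \<in> carrier_mat d d \<and> V \<in> carrier_mat d d \<and> V * U = 1\<^sub>m d"

lemma good_one: "good d (1\<^sub>m d) (1\<^sub>m d)" unfolding good_def by simp

lemma good_comp: assumes "good d U V" "good d U' V'" shows "good d (U' * U) (V * V')"
proof -
  have c: "U \<in> carrier_mat d d" "V \<in> carrier_mat d d" "U' \<in> carrier_mat d d" "V' \<in> carrier_mat d d"
    and e: "V * U = 1\<^sub>m d" "V' * U' = 1\<^sub>m d" using assms unfolding good_def by auto
  have "(V * V') * (U' * U) = V * (V' * (U' * U))" using c by (intro assoc_mult_mat) auto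
  also have "V' * (U' * U) = (V' * U') * U" using c by (intro assoc_mult_mat[symmetric]) auto
  finally have "(V * V') * (U' * U) = V * ((V' * U') * U)" .
  also have "\<dots> = 1\<^sub>m d" using c e by simp
  finally show ?thesis using c unfolding good_def by simp
qed

lemma good_add: assumes "k < d" "l < d" "k \<noteq> l"
  shows "good d (addrow_mat d a k l) (addrow_mat d (- a) k l)"
  unfolding good_def using addrow_mat_inv[OF assms, of "- a"] by simp

lemma good_swap: assumes "k < d" "l < d"
  shows "good d (swaprows_mat d k l) (swaprows_mat d k l)"
  unfolding good_def using swaprows_mat_inv[OF assms] by simp

definition zc :: "nat \<Rightarrow> nat \<Rightarrow> int mat \<Rightarrow> bool" where
  "zc d k A \<longleftrightarrow> (\<forall>i<d. \<forall>c<k. c < i \<longrightarrow> A $$ (i,c) = 0)"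

lemma euclid_arith:
  fixes x y :: int assumes "x \<noteq> 0" "y \<noteq> 0" "\<bar>y\<bar> \<le> \<bar>x\<bar>"
  shows "\<bar>- (sgn x * sgn y) * y + x\<bar> < \<bar>x\<bar>"
  using assms by (cases "x > 0"; cases "y > 0") (auto simp: sgn_if)

lemma inner:
  assumes A: "A \<in> carrier_mat d d" and k: "k < d" and z: "zc d k A"
  shows "\<exists>U V. good d U V \<and> zc d (Suc k) (U * A)"
  using A z
proof (induction "\<Sum>i\<in>{k..<d}. nat \<bar>A $$ (i,k)\<bar>" arbitrary: A rule: less_induct)
  case less
  note A = less.prems(1) and z = less.prems(2)
  show ?case
  proof (cases "\<forall>i. k < i \<and> i < d \<longrightarrow> A $$ (i,k) = 0")
    case True
    have "zc d (Suc k) A" unfolding zc_def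
    proof (intro allI impI)
      fix i c assume i: "i < d" and c: "c < Suc k" "c < i"
      show "A $$ (i,c) = 0"
      proof (cases "c < k")
        case True then show ?thesis using z i c unfolding zc_def by blast
      next
        case False then have "c = k" using c by simp
        then show ?thesis using \<open>\<forall>i. k < i \<and> i < d \<longrightarrow> A $$ (i,k) = 0\<close> i c by blast
      qed
    qed
    then show ?thesis using good_one A by (intro exI[of _ "1\<^sub>m d"]) auto
  next
    case False
    then obtain i0 where i0: "k < i0" "i0 < d" "A $$ (i0,k) \<noteq> 0" by auto
    show ?thesis
    proof (cases "\<exists>r s. r \<in> {k..<d} \<and> s \<in> {k..<d} \<and> r \<noteq> s \<and> A $$ (r,k) \<noteq> 0 \<and> A $$ (s,k) \<noteq> 0 \<and>
        \<bar>A $$ (s,k)\<bar> \<le> \<bar>A $$ (r,k)\<bar>")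
      case True
      then obtain r s where r: "r \<in> {k..<d}" and s: "s \<in> {k..<d}" and rs: "r \<noteq> s"
        and ar: "A $$ (r,k) \<noteq> 0" and as: "A $$ (s,k) \<noteq> 0" and le: "\<bar>A $$ (s,k)\<bar> \<le> \<bar>A $$ (r,k)\<bar>"
        by blast
      define a where "a = - (sgn (A $$ (r,k)) * sgn (A $$ (s,k)))"
      define A2 where "A2 = addrow a r s A"
      have rd: "r < d" and sd: "s < d" using r s by auto
      have A2m: "A2 = addrow_mat d a r s * A" unfolding A2_def using A sd by (rule addrow_mat)
      have A2c: "A2 \<in> carrier_mat d d" unfolding A2_def using A by simp
      have A2e: "A2 $$ (i,c) = (if r = i then a * A $$ (s,c) + A $$ (i,c) else A $$ (i,c))"
        if "i < d" "c < d" for i c unfolding A2_def using that A sd by simp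
      have z2: "zc d k A2" unfolding zc_def
      proof (intro allI impI)
        fix i c assume "i < d" "c < k" "c < i"
        then show "A2 $$ (i,c) = 0" using A2e[of i c] z r s k unfolding zc_def by auto
      qed
      have lt: "(\<Sum>i\<in>{k..<d}. nat \<bar>A2 $$ (i,k)\<bar>) < (\<Sum>i\<in>{k..<d}. nat \<bar>A $$ (i,k)\<bar>)"
      proof (rule sum_strict_mono_ex1)
        show "finite {k..<d}" by simp
        show "\<forall>i\<in>{k..<d}. nat \<bar>A2 $$ (i,k)\<bar> \<le> nat \<bar>A $$ (i,k)\<bar>"
        proof
          fix i assume i: "i \<in> {k..<d}"
          show "nat \<bar>A2 $$ (i,k)\<bar> \<le> nat \<bar>A $$ (i,k)\<bar>"
          proof (cases "i = r")
            case True
            then show ?thesis using A2e[of r k] rd k euclid_arith[OF ar as le] unfolding a_def by simp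
          next
            case False
            then show ?thesis using A2e[of i k] i k by simp
          qed
        qed
        show "\<exists>i\<in>{k..<d}. nat \<bar>A2 $$ (i,k)\<bar> < nat \<bar>A $$ (i,k)\<bar>"
          using A2e[of r k] rd k euclid_arith[OF ar as le] r unfolding a_def by (intro bexI[of _ r]) auto
      qed
      from less.hyps[OF lt A2c z2] obtain U V where UV: "good d U V" "zc d (Suc k) (U * A2)" by blast
      have g: "good d (U * addrow_mat d a r s) (addrow_mat d (- a) r s * V)"
        by (rule good_comp[OF good_add[OF rd sd rs] UV(1)])
      have "U * A2 = (U * addrow_mat d a r s) * A" unfolding A2m using UV(1) A
        by (intro assoc_mult_mat[symmetric]) (auto simp: good_def)
      then show ?thesis using g UV(2) by (intro exI[of _ "U * addrow_mat d a r s"] exI[of _ "addrow_mat d (- a) r s * V"]) simp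
    next
      case False
      have other: "A $$ (i,k) = 0" if "i \<in> {k..<d}" "i \<noteq> i0" for i
      proof (rule ccontr)
        assume ne: "A $$ (i,k) \<noteq> 0"
        have i0s: "i0 \<in> {k..<d}" using i0 by auto
        show False
        proof (cases "\<bar>A $$ (i,k)\<bar> \<le> \<bar>A $$ (i0,k)\<bar>")
          case True
          have "\<exists>r s. r \<in> {k..<d} \<and> s \<in> {k..<d} \<and> r \<noteq> s \<and> A $$ (r,k) \<noteq> 0 \<and> A $$ (s,k) \<noteq> 0 \<and>
            \<bar>A $$ (s,k)\<bar> \<le> \<bar>A $$ (r,k)\<bar>"
            using True that i0s ne i0(3) by (intro exI[of _ i0] exI[of _ i]) auto
          with False show False by blast
        next
          case c: False
          have "\<exists>r s. r \<in> {k..<d} \<and> s \<in> {k..<d} \<and> r \<noteq> s \<and> A $$ (r,k) \<noteq> 0 \<and> A $$ (s,k) \<noteq> 0 \<and>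
            \<bar>A $$ (s,k)\<bar> \<le> \<bar>A $$ (r,k)\<bar>"
            using c that i0s ne i0(3) by (intro exI[of _ i] exI[of _ i0]) auto
          with False show False by blast
        qed
      qed
      define A3 where "A3 = swaprows k i0 A"
      have A3m: "A3 = swaprows_mat d k i0 * A" unfolding A3_def using A k i0 by (intro swaprows_mat) auto
      have A3e: "A3 $$ (i,c) = (if k = i then A $$ (i0,c) else if i0 = i then A $$ (k,c) else A $$ (i,c))"
        if "i < d" "c < d" for i c unfolding A3_def using that A by simp
      have "zc d (Suc k) A3" unfolding zc_def
      proof (intro allI impI)
        fix i c assume i: "i < d" and c: "c < Suc k" "c < i"
        show "A3 $$ (i,c) = 0"
        proof (cases "c < k")
          case True
          then show ?thesis using A3e[of i c] z i c k i0 unfolding zc_def by auto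
        next
          case False
          then have ck: "c = k" using c by simp
          then show ?thesis using A3e[of i c] i c k i0 other[of k] other[of i] by auto
        qed
      qed
      then show ?thesis using good_swap[of k d i0] k i0 unfolding A3m by blast
    qed
  qed
qed

lemma triang_exists:
  assumes B: "B \<in> carrier_mat d d"
  shows "\<exists>U V. good d U V \<and> upper_triangular (U * B)"
proof -
  have "k \<le> d \<Longrightarrow> \<exists>U V. good d U V \<and> zc d k (U * B)" for k
  proof (induction k)
    case 0
    then show ?case using good_one B by (intro exI[of _ "1\<^sub>m d"]) (auto simp: zc_def)
  next
    case (Suc k)
    then obtain U V where UV: "good d U V" "zc d k (U * B)" by auto
    have UB: "U * B \<in> carrier_mat d d" using UV B unfolding good_def by auto
    from inner[OF UB _ UV(2)] Suc(2) obtain U' V' where U': "good d U' V'" "zc d (Suc k) (U' * (U * B))"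
      by auto
    have "U' * (U * B) = (U' * U) * B" using U' UV B unfolding good_def by (intro assoc_mult_mat[symmetric]) auto
    then show ?case using good_comp[OF UV(1) U'(1)] U'(2) by (intro exI[of _ "U' * U"] exI[of _ "V * V'"]) simp
  qed
  from this[of d] obtain U V where "good d U V" "zc d d (U * B)" by auto
  then show ?thesis unfolding zc_def upper_triangular_def using B unfolding good_def
    by (intro exI[of _ U] exI[of _ V]) auto
qed



lemma frac_mult_inv:
  assumes U: "U \<in> carrier_mat d d" and V: "V \<in> carrier_mat d d" and VU: "V * U = 1\<^sub>m d"
    and C: "C \<in> carrier_mat d j"
  shows "fractionality (U * C) i = fractionality C i"
proof -
  let ?h = "map_mat rat_of_int"
  have h1: "?h (U * C) *\<^sub>v x = ?h U *\<^sub>v (?h C *\<^sub>v x)" if x: "x \<in> carrier_vec j" for x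
    using U C x by (simp add: of_int_hom.mat_hom_mult)
  have h2: "?h C *\<^sub>v x = ?h V *\<^sub>v (?h (U * C) *\<^sub>v x)" if x: "x \<in> carrier_vec j" for x
  proof -
    have "?h V *\<^sub>v (?h (U * C) *\<^sub>v x) = (?h V * ?h (U * C)) *\<^sub>v x"
      using U V C x by (intro assoc_mult_mat_vec[symmetric]) auto
    also have "?h V * ?h (U * C) = ?h (V * (U * C))"
      using U V C by (intro of_int_hom.mat_hom_mult[symmetric]) auto
    also have "V * (U * C) = (V * U) * C" using U V C by (intro assoc_mult_mat[symmetric]) auto
    also have "\<dots> = C" using VU C by simp
    finally show ?thesis by simp
  qed
  have hv: "?h A *\<^sub>v map_vec rat_of_int b = map_vec rat_of_int (A *\<^sub>v b)"
    if "A \<in> carrier_mat d d" "b \<in> carrier_vec d" for A b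
    using of_int_hom.mult_mat_vec_hom[OF that] by (rule sym)
  have "{den (x $ i) | x b. b \<in> carrier_vec (dim_row (U * C)) \<and> x \<in> carrier_vec (dim_col (U * C)) \<and>
          ?h (U * C) *\<^sub>v x = map_vec rat_of_int b}
      = {den (x $ i) | x b. b \<in> carrier_vec (dim_row C) \<and> x \<in> carrier_vec (dim_col C) \<and>
          ?h C *\<^sub>v x = map_vec rat_of_int b}"
  proof (rule subset_antisym; rule subsetI)
    fix z assume "z \<in> {den (x $ i) | x b. b \<in> carrier_vec (dim_row (U * C)) \<and> x \<in> carrier_vec (dim_col (U * C)) \<and>
          ?h (U * C) *\<^sub>v x = map_vec rat_of_int b}"
    then obtain x b where z: "z = den (x $ i)" and b: "b \<in> carrier_vec d" and x: "x \<in> carrier_vec j"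
      and e: "?h (U * C) *\<^sub>v x = map_vec rat_of_int b" using U C by auto
    have "?h C *\<^sub>v x = map_vec rat_of_int (V *\<^sub>v b)" using h2[OF x] e hv[OF V b] by simp
    moreover have "V *\<^sub>v b \<in> carrier_vec d" using V b by simp
    ultimately show "z \<in> {den (x $ i) | x b. b \<in> carrier_vec (dim_row C) \<and> x \<in> carrier_vec (dim_col C) \<and>
          ?h C *\<^sub>v x = map_vec rat_of_int b}" using z x C by auto
  next
    fix z assume "z \<in> {den (x $ i) | x b. b \<in> carrier_vec (dim_row C) \<and> x \<in> carrier_vec (dim_col C) \<and>
          ?h C *\<^sub>v x = map_vec rat_of_int b}"
    then obtain x b where z: "z = den (x $ i)" and b: "b \<in> carrier_vec d" and x: "x \<in> carrier_vec j"
      and e: "?h C *\<^sub>v x = map_vec rat_of_int b" using C by auto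
    have "?h (U * C) *\<^sub>v x = map_vec rat_of_int (U *\<^sub>v b)" using h1[OF x] e hv[OF U b] by simp
    moreover have "U *\<^sub>v b \<in> carrier_vec d" using U b by simp
    ultimately show "z \<in> {den (x $ i) | x b. b \<in> carrier_vec (dim_row (U * C)) \<and> x \<in> carrier_vec (dim_col (U * C)) \<and>
          ?h (U * C) *\<^sub>v x = map_vec rat_of_int b}" using z x C U by auto
  qed
  then show ?thesis unfolding fractionality_def by simp
qed

lemma cols_mult:
  assumes U: "U \<in> carrier_mat d d" and B: "B \<in> carrier_mat d d" and j: "j \<le> d"
  shows "mat_of_cols d (map (col (U * B)) [0..<j]) = U * mat_of_cols d (map (col B) [0..<j])"
proof (rule eq_matI)
  fix i k assume i: "i < dim_row (U * mat_of_cols d (map (col B) [0..<j]))"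
    and k: "k < dim_col (U * mat_of_cols d (map (col B) [0..<j]))"
  then have i': "i < d" and k': "k < j" using U by auto
  have "col (mat_of_cols d (map (col B) [0..<j])) k = col B k"
    using k' j B by (subst col_mat_of_cols) auto
  then show "mat_of_cols d (map (col (U * B)) [0..<j]) $$ (i, k) = (U * mat_of_cols d (map (col B) [0..<j])) $$ (i, k)"
    using i' k' j U B by (simp add: mat_of_cols_index)
qed (use U in auto)

lemma sum_single: assumes "m < n" "\<And>l. l < n \<Longrightarrow> l \<noteq> m \<Longrightarrow> f l = (0 :: 'a :: comm_monoid_add)"
  shows "(\<Sum>l<(n::nat). f l) = f m"
proof -
  have "(\<Sum>l<n. f l) = f m + (\<Sum>l\<in>{..<n} - {m}. f l)" using assms(1) by (intro sum.remove) auto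
  also have "(\<Sum>l\<in>{..<n} - {m}. f l) = 0" using assms by (intro sum.neutral) auto
  finally show ?thesis by simp
qed

lemma frac_triangular:
  assumes T: "T \<in> carrier_mat d d" and ut: "upper_triangular T" and dg: "\<And>i. i < d \<Longrightarrow> T $$ (i,i) \<noteq> 0"
    and j: "1 \<le> j" "j \<le> d"
  shows "fractionality (mat_of_cols d (map (col T) [0..<j])) (j - 1) = \<bar>T $$ (j - 1, j - 1)\<bar>"
proof -
  define m where "m = j - 1"
  have jm: "j = Suc m" and md: "m < d" using j unfolding m_def by auto
  let ?C = "mat_of_cols d (map (col T) [0..<j])"
  let ?h = "map_mat rat_of_int"
  have Tz: "T $$ (i,l) = 0" if "l < i" "i < d" for i l using ut that T unfolding upper_triangular_def by auto
  define S where "S = {den (x $ m) | x b. b \<in> carrier_vec (dim_row ?C) \<and> x \<in> carrier_vec (dim_col ?C) \<and>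
          ?h ?C *\<^sub>v x = map_vec rat_of_int b}"
  have Cent: "(?h ?C *\<^sub>v x) $ i = (\<Sum>l<j. of_int (T $$ (i,l)) * x $ l)" if "i < d" "x \<in> carrier_vec j" for i x
  proof -
    have "(?h ?C *\<^sub>v x) $ i = (\<Sum>l<length (map (col T) [0..<j]). of_int (map (col T) [0..<j] ! l $ i) * x $ l)"
      by (rule mv_entry) (use that in auto)
    also have "\<dots> = (\<Sum>l<j. of_int (T $$ (i,l)) * x $ l)" using that T j by (intro sum.cong) auto
    finally show ?thesis .
  qed
  have ub: "s \<le> \<bar>T $$ (m,m)\<bar>" if "s \<in> S" for s
  proof -
    from that obtain x b where s: "s = den (x $ m)" and b: "b \<in> carrier_vec d" and x: "x \<in> carrier_vec j"
      and e: "?h ?C *\<^sub>v x = map_vec rat_of_int b" unfolding S_def by auto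
    have "of_int (b $ m) = (?h ?C *\<^sub>v x) $ m" using e b md by simp
    also have "\<dots> = (\<Sum>l<j. of_int (T $$ (m,l)) * x $ l)" by (rule Cent[OF md x])
    also have "\<dots> = of_int (T $$ (m,m)) * x $ m" unfolding jm using md by (intro sum_single) (auto simp: Tz)
    finally have "of_int (T $$ (m,m)) * x $ m = of_int (b $ m)" by simp
    then have "of_int \<bar>T $$ (m,m)\<bar> * x $ m = of_int (sgn (T $$ (m,m)) * b $ m)"
      by (cases "T $$ (m,m) \<ge> 0") (auto simp: sgn_if)
    then have "of_int \<bar>T $$ (m,m)\<bar> * x $ m \<in> \<int>" by simp
    then show ?thesis unfolding s using dg[OF md] by (intro den_le) auto
  qed
  obtain Ti where Ti: "Ti \<in> carrier_mat d d" "?h T * Ti = 1\<^sub>m d"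
  proof -
    have "det (?h T) \<noteq> 0" using det_upper_triangular[OF ut T] dg carrier_matD[OF T]
      by (simp add: prod_list_diag_prod)
    from det_non_zero_imp_unit[OF _ this, of d, unfolded Units_def, of "()"] T
    show ?thesis using that by (auto simp: ring_mat_def)
  qed
  define y where "y = Ti *\<^sub>v unit_vec d m"
  have Ty: "?h T *\<^sub>v y = unit_vec d m" unfolding y_def using Ti T
    by (subst assoc_mult_mat_vec[symmetric, of _ d d]) auto
  have yc: "y \<in> carrier_vec d" unfolding y_def using Ti by simp
  have Tent: "(?h T *\<^sub>v y) $ i = (\<Sum>l<d. of_int (T $$ (i,l)) * y $ l)" if "i < d" for i
    using that T yc by (simp add: scalar_prod_def atLeast0LessThan)
  have yz: "\<forall>k. d - k = r \<longrightarrow> m < k \<longrightarrow> k < d \<longrightarrow> y $ k = 0" for r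
  proof (induction r rule: less_induct)
    case (less r)
    show ?case
    proof (intro allI impI)
      fix k assume r: "d - k = r" and mk: "m < k" and kd: "k < d"
      have "0 = (?h T *\<^sub>v y) $ k" using Ty mk kd by simp
      also have "\<dots> = (\<Sum>l<d. of_int (T $$ (k,l)) * y $ l)" by (rule Tent[OF kd])
      also have "\<dots> = of_int (T $$ (k,k)) * y $ k"
      proof (rule sum_single[OF kd])
        fix l assume l: "l < d" "l \<noteq> k"
        show "of_int (T $$ (k,l)) * y $ l = 0"
        proof (cases "l < k")
          case True then show ?thesis using Tz kd by simp
        next
          case False
          then have "d - l < r" "m < l" using l r mk by auto
          then show ?thesis using less.IH l by auto
        qed
      qed
      finally show "y $ k = 0" using dg[OF kd] by simp
    qed
  qed
  have yz': "y $ k = 0" if "m < k" "k < d" for k using yz[of "d - k"] that by simp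
  have ym: "y $ m = 1 / of_int (T $$ (m,m))"
  proof -
    have "1 = (?h T *\<^sub>v y) $ m" using Ty md by simp
    also have "\<dots> = (\<Sum>l<d. of_int (T $$ (m,l)) * y $ l)" by (rule Tent[OF md])
    also have "\<dots> = of_int (T $$ (m,m)) * y $ m"
    proof (rule sum_single[OF md])
      fix l assume l: "l < d" "l \<noteq> m"
      show "of_int (T $$ (m,l)) * y $ l = 0"
        using l Tz[of l m] md yz'[of l] by (cases "l < m") auto
    qed
    finally show ?thesis using dg[OF md] by (simp add: field_simps)
  qed
  define x where "x = vec j (\<lambda>l. y $ l)"
  have xc: "x \<in> carrier_vec j" unfolding x_def by simp
  have "?h ?C *\<^sub>v x = map_vec rat_of_int (unit_vec d m)"
  proof (rule eq_vecI)
    fix i assume "i < dim_vec (map_vec rat_of_int (unit_vec d m :: int vec))"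
    then have i: "i < d" by simp
    have "(?h ?C *\<^sub>v x) $ i = (\<Sum>l<j. of_int (T $$ (i,l)) * y $ l)"
      unfolding Cent[OF i xc] unfolding x_def by (intro sum.cong) auto
    also have "\<dots> = (\<Sum>l<d. of_int (T $$ (i,l)) * y $ l)"
    proof -
      have "(\<Sum>l<d. of_int (T $$ (i,l)) * y $ l) = (\<Sum>l<j. of_int (T $$ (i,l)) * y $ l)"
        using j by (intro sum.mono_neutral_right) (auto simp: yz' jm)
      then show ?thesis by simp
    qed
    also have "\<dots> = (?h T *\<^sub>v y) $ i" using Tent[OF i] by simp
    also have "\<dots> = map_vec rat_of_int (unit_vec d m) $ i" using Ty i by (simp add: unit_vec_def)
    finally show "(?h ?C *\<^sub>v x) $ i = map_vec rat_of_int (unit_vec d m) $ i" .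
  qed (simp)
  then have "den (x $ m) \<in> S" unfolding S_def using xc
    by (intro CollectI exI[of _ x] exI[of _ "unit_vec d m :: int vec"]) simp
  moreover have "den (x $ m) = \<bar>T $$ (m,m)\<bar>" unfolding x_def using jm ym den_inv[OF dg[OF md]] by simp
  ultimately have inS: "\<bar>T $$ (m,m)\<bar> \<in> S" by simp
  have fS: "finite S"
  proof (rule finite_subset)
    show "S \<subseteq> {0..\<bar>T $$ (m,m)\<bar>}"
    proof
      fix s assume s: "s \<in> S"
      then have "s \<le> \<bar>T $$ (m,m)\<bar>" by (rule ub)
      moreover from s have "s > 0" unfolding S_def using den_pos by auto
      ultimately show "s \<in> {0..\<bar>T $$ (m,m)\<bar>}" by simp
    qed
  qed simp
  have "Max S = \<bar>T $$ (m,m)\<bar>" using fS inS ub by (intro Max_eqI) auto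
  then show ?thesis unfolding fractionality_def S_def[symmetric] m_def[symmetric] by simp
qed

lemma prod_shift: "(\<Prod>i = 1..(n::nat). g (i - 1)) = (\<Prod>i<n. (g i :: 'a :: comm_monoid_mult))"
  by (induction n) (simp_all add: lessThan_Suc mult.commute)

theorem mainTheorem4:
  fixes B :: "int mat" and d :: nat and p :: "nat \<Rightarrow> nat"
  assumes "B \<in> carrier_mat d d"
    and "det B \<noteq> 0"
    and "p permutes {..<d}"
  shows "\<bar>det B\<bar> = int (card (lattice_points_parallelepiped B))
       \<and> int (card (lattice_points_parallelepiped B)) =
         (\<Prod>j = 1..d. fractionality (mat_of_cols d (map (\<lambda>k. col B (p k)) [0..<j])) (j - 1))"
proof
  note B = assms(1) and dB = assms(2) and p = assms(3)
  show "int (card (lattice_points_parallelepiped B)) =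
         (\<Prod>j = 1..d. fractionality (mat_of_cols d (map (\<lambda>k. col B (p k)) [0..<j])) (j - 1))"
    unfolding P_perm[OF B p] by (rule claim2[OF B dB p]) simp
  have idp: "id permutes {..<d}" by (rule permutes_id)
  have c2: "int (card (lattice_points_parallelepiped B)) =
      (\<Prod>j = 1..d. fractionality (mat_of_cols d (map (col B) [0..<j])) (j - 1))"
    using claim2[OF B dB idp, of d] P_perm[OF B idp] by simp
  obtain U V where UV: "good d U V" and ut: "upper_triangular (U * B)" using triang_exists[OF B] by blast
  have U: "U \<in> carrier_mat d d" and V: "V \<in> carrier_mat d d" and VU: "V * U = 1\<^sub>m d"
    using UV unfolding good_def by auto
  define T where "T = U * B"
  have T: "T \<in> carrier_mat d d" unfolding T_def using U B by simp
  have "det V * det U = 1" using det_mult[OF V U] VU by simp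
  then have "\<bar>det U * det V\<bar> = 1" by (simp add: mult.commute)
  then have dU: "\<bar>det U\<bar> = 1" by (rule abs_zmult_eq_1)
  have dT: "det T = det U * det B" unfolding T_def by (rule det_mult[OF U B])
  have adT: "\<bar>det T\<bar> = \<bar>det B\<bar>" using dT dU by (simp add: abs_mult)
  have dTp: "det T = (\<Prod>i<d. T $$ (i,i))"
    using det_upper_triangular[OF ut[folded T_def] T] T by (simp add: prod_list_diag_prod atLeast0LessThan)
  have dg: "T $$ (i,i) \<noteq> 0" if i: "i < d" for i
  proof
    assume "T $$ (i,i) = 0"
    then have "(\<Prod>i<d. T $$ (i,i)) = 0" using i by (intro prod_zero) auto
    then have "det U * det B = 0" using dTp dT by simp
    then show False using dB dU by auto
  qed
  have "(\<Prod>j = 1..d. fractionality (mat_of_cols d (map (col B) [0..<j])) (j - 1))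
      = (\<Prod>j = 1..d. \<bar>T $$ (j - 1, j - 1)\<bar>)"
  proof (rule prod.cong[OF refl])
    fix j assume j: "j \<in> {1..d}"
    have Cc: "mat_of_cols d (map (col B) [0..<j]) \<in> carrier_mat d j" by (metis length_map length_upt mat_of_cols_carrier(1) minus_nat.diff_0)
    have "fractionality (mat_of_cols d (map (col B) [0..<j])) (j - 1)
        = fractionality (U * mat_of_cols d (map (col B) [0..<j])) (j - 1)"
      by (rule frac_mult_inv[OF U V VU Cc, symmetric])
    also have "U * mat_of_cols d (map (col B) [0..<j]) = mat_of_cols d (map (col T) [0..<j])"
      unfolding T_def using cols_mult[OF U B] j by simp
    also have "fractionality \<dots> (j - 1) = \<bar>T $$ (j - 1, j - 1)\<bar>"
      by (rule frac_triangular[OF T ut[folded T_def] dg]) (use j in auto)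
    finally show "fractionality (mat_of_cols d (map (col B) [0..<j])) (j - 1) = \<bar>T $$ (j - 1, j - 1)\<bar>" .
  qed
  also have "\<dots> = (\<Prod>i<d. \<bar>T $$ (i, i)\<bar>)" by (rule prod_shift[where g = "\<lambda>i. \<bar>T $$ (i,i)\<bar>"])
  also have "\<dots> = \<bar>det T\<bar>" unfolding dTp by (simp add: abs_prod)
  finally show "\<bar>det B\<bar> = int (card (lattice_points_parallelepiped B))" using c2 adT by simp
qed


end
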